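(* For every constant $c_0>0$ there is a constant $K$ (depending only on $c_0$) such that the following holds. For any real symmetric positive definite matrix $M$, any matrix $Z$ with $M^{-1}\approx_{c_0}ZZ^\top$, and any $\epsilon>0$, there exists a linear operator $\tilde C$, given by a polynomial expression in $M$, $Z$ and $Z^\top$ of degree at most $K\max(1,\log(1/\epsilon))$, such that $\tilde C\tilde C^\top\approx_\epsilon M^{-1}$.
   Context: For symmetric $A,B$, $A\approx_\epsilon B$ means $e^{\epsilon}A\succeq B\succeq e^{-\epsilon}A$ in the Loewner order. *)

theory Defs
  imports "Jordan_Normal_Form.Matrix"
begin

definition pos_def_mat :: "real mat \<Rightarrow> bool" where
  "pos_def_mat M \<longleftrightarrow> M \<in> carrier_mat (dim_row M) (dim_row M) \<and> transpose_mat M = M \<and>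
     (\<forall>x \<in> carrier_vec (dim_row M). x \<noteq> 0\<^sub>v (dim_row M) \<longrightarrow> x \<bullet> (M *\<^sub>v x) > 0)"

definition loewner_ge :: "real mat \<Rightarrow> real mat \<Rightarrow> bool" where
  "loewner_ge A B \<longleftrightarrow> A \<in> carrier_mat (dim_row A) (dim_row A) \<and> B \<in> carrier_mat (dim_row A) (dim_row A) \<and>
     (\<forall>x \<in> carrier_vec (dim_row A). x \<bullet> (B *\<^sub>v x) \<le> x \<bullet> (A *\<^sub>v x))"

definition spec_approx :: "real \<Rightarrow> real mat \<Rightarrow> real mat \<Rightarrow> bool" where
  "spec_approx eps A B \<longleftrightarrow> loewner_ge (exp eps \<cdot>\<^sub>m A) B \<and> loewner_ge B (exp (- eps) \<cdot>\<^sub>m A)"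

text \<open>poly_expr M Z C d: C is given by a (noncommutative) polynomial expression in
  M, Z and Z^T with real coefficients, of degree at most d.\<close>
inductive poly_expr :: "real mat \<Rightarrow> real mat \<Rightarrow> real mat \<Rightarrow> nat \<Rightarrow> bool"
  for M Z :: "real mat" where
  id_row: "poly_expr M Z (1\<^sub>m (dim_row Z)) 0"
| id_col: "poly_expr M Z (1\<^sub>m (dim_col Z)) 0"
| var_M: "poly_expr M Z M 1"
| var_Z: "poly_expr M Z Z 1"
| var_ZT: "poly_expr M Z (transpose_mat Z) 1"
| smult: "poly_expr M Z A d \<Longrightarrow> poly_expr M Z (c \<cdot>\<^sub>m A) d"
| add: "poly_expr M Z A d \<Longrightarrow> poly_expr M Z B d \<Longrightarrow> dim_row A = dim_row B \<Longrightarrow>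
        dim_col A = dim_col B \<Longrightarrow> poly_expr M Z (A + B) d"
| mult: "poly_expr M Z A d1 \<Longrightarrow> poly_expr M Z B d2 \<Longrightarrow> dim_col A = dim_row B \<Longrightarrow>
        poly_expr M Z (A * B) (d1 + d2)"
| mono: "poly_expr M Z A d \<Longrightarrow> d \<le> d' \<Longrightarrow> poly_expr M Z A d'"

end

theory Submission
  imports Defs "HOL-Computational_Algebra.Formal_Power_Series" "Jordan_Normal_Form.Determinant"
begin


definition cc :: "nat \<Rightarrow> real" where "cc j = (-1)^j * ((-1/2::real) gchoose j)"

lemma cc_conv: "(\<Sum>i=0..m. cc i * cc (m-i)) = 1"
proof -
  have V: "(\<Sum>i=0..m. ((-1/2::real) gchoose i) * ((-1/2) gchoose (m-i))) = (-1) gchoose m"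
    using gbinomial_Vandermonde[of "-1/2::real" "-1/2" m] by simp
  have m1: "((-1::real) gchoose m) = (-1)^m"
    by (simp add: gbinomial_pochhammer pochhammer_fact[symmetric])
  have "(\<Sum>i=0..m. cc i * cc (m-i)) = (\<Sum>i=0..m. (-1)^m * (((-1/2::real) gchoose i) * ((-1/2) gchoose (m-i))))"
  proof (rule sum.cong[OF refl])
    fix i assume "i \<in> {0..m}"
    then have "(-1::real)^i * (-1)^(m-i) = (-1)^m" by (simp add: power_add[symmetric])
    then show "cc i * cc (m-i) = (-1)^m * (((-1/2::real) gchoose i) * ((-1/2) gchoose (m-i)))"
      unfolding cc_def by (metis (no_types, lifting) mult.assoc mult.left_commute)
  qed
  also have "\<dots> = 1" unfolding sum_distrib_left[symmetric] V m1 by (simp add: power_mult_distrib[symmetric])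
  finally show ?thesis .
qed

lemma poch_half_le: "pochhammer (1/2::real) j \<le> pochhammer 1 j \<and> 0 \<le> pochhammer (1/2::real) j"
proof (induction j)
  case 0 then show ?case by simp
next
  case (Suc j)
  then show ?case by (simp add: pochhammer_Suc mult_mono)
qed

lemma cc_alt: "cc j = pochhammer (1/2::real) j / fact j"
  unfolding cc_def gbinomial_pochhammer by (simp add: power_mult_distrib[symmetric])

lemma cc_nonneg: "0 \<le> cc j" using poch_half_le[of j] by (simp add: cc_alt)
lemma cc_le1: "cc j \<le> 1" using poch_half_le[of j] pochhammer_pos[of "1::real" j] by (simp add: cc_alt pochhammer_fact divide_le_eq_1)

definition hh :: "nat \<Rightarrow> nat \<Rightarrow> real" where
  "hh N m = (\<Sum>i<N. \<Sum>j<N. if i + j = m then cc i * cc j else 0)"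

lemma inner_delta: fixes i m N :: nat shows "(\<Sum>j<N. if i + j = m then f j else (0::real)) = (if i \<le> m \<and> m - i < N then f (m - i) else 0)"
proof -
  have "(\<Sum>j<N. if i + j = m then f j else (0::real)) = (\<Sum>j<N. if j = m - i then (if i \<le> m then f j else 0) else 0)"
  proof (rule sum.cong[OF refl])
    fix j show "(if i + j = m then f j else 0) = (if j = m - i then (if i \<le> m then f j else 0) else 0)"
      by (cases "i + j = m") auto
  qed
  also have "\<dots> = (if i \<le> m \<and> m - i < N then f (m - i) else 0)"
    by (subst sum.delta) auto
  finally show ?thesis .
qed

lemma hh_alt: "hh N m = (\<Sum>i<N. if i \<le> m \<and> m - i < N then cc i * cc (m - i) else 0)"
  unfolding hh_def by (rule sum.cong[OF refl], rule inner_delta)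

lemma hh_small: assumes "m < N" shows "hh N m = 1"
proof -
  have "hh N m = (\<Sum>i\<in>{0..m}. cc i * cc (m - i))"
    unfolding hh_alt using assms
    by (intro sum.mono_neutral_cong_right) auto
  then show ?thesis using cc_conv by simp
qed

lemma hh_bounds: "0 \<le> hh N m \<and> hh N m \<le> real N"
proof -
  have t: "\<And>i. 0 \<le> (if i \<le> m \<and> m - i < N then cc i * cc (m - i) else 0) \<and> (if i \<le> m \<and> m - i < N then cc i * cc (m - i) else 0) \<le> 1"
    using cc_nonneg cc_le1 by (simp add: mult_le_one)
  have "hh N m \<le> (\<Sum>i<N. 1)" unfolding hh_alt by (rule sum_mono) (use t in auto)
  moreover have "0 \<le> hh N m" unfolding hh_alt by (rule sum_nonneg) (use t in auto)
  ultimately show ?thesis by simp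
qed

lemma hh_sum: assumes "2 * N \<le> K"
  shows "(\<Sum>m<K. hh N m * g m) = (\<Sum>i<N. \<Sum>j<N. cc i * cc j * g (i + j))"
proof -
  have "(\<Sum>m<K. hh N m * g m) = (\<Sum>m<K. \<Sum>i<N. \<Sum>j<N. if i + j = m then cc i * cc j * g m else 0)"
    unfolding hh_def sum_distrib_right by (intro sum.cong refl) auto
  also have "\<dots> = (\<Sum>i<N. \<Sum>j<N. \<Sum>m<K. if i + j = m then cc i * cc j * g m else 0)"
    by (subst sum.swap, subst (2) sum.swap, rule refl)
  also have "\<dots> = (\<Sum>i<N. \<Sum>j<N. cc i * cc j * g (i + j))"
  proof (intro sum.cong refl)
    fix i j assume "i \<in> {..<N}" "j \<in> {..<N}"
    then have "i + j < K" using assms by auto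
    then show "(\<Sum>m<K. if i + j = m then cc i * cc j * g m else 0) = cc i * cc j * g (i + j)"
      by (subst sum.delta') auto
  qed
  finally show ?thesis .
qed

definition ee :: "nat \<Rightarrow> nat \<Rightarrow> real" where
  "ee N m = hh N m - (if m = 0 then 0 else hh N (m - 1))"

lemma scalar_main:
  fixes G :: "nat \<Rightarrow> real"
  assumes N: "N \<ge> 1" and r: "0 \<le> r" "r \<le> 1" and V: "G 0 = V" "V \<ge> 0"
    and Gb: "\<And>m. \<bar>G m\<bar> \<le> r ^ m * V"
  shows "\<bar>(\<Sum>i<N. \<Sum>j<N. cc i * cc j * (G (i + j) - G (i + j + 1))) - V\<bar> \<le> real N * (real N + 1) * r ^ N * V"
proof -
  let ?h' = "\<lambda>m. (if m = 0 then 0 else hh N (m - 1))"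
  have D1: "(\<Sum>i<N. \<Sum>j<N. cc i * cc j * G (i + j)) = (\<Sum>m<2*N+1. hh N m * G m)"
    by (rule hh_sum[symmetric]) simp
  have "(\<Sum>m<Suc (2*N). ?h' m * G m) = ?h' 0 * G 0 + (\<Sum>m<2*N. ?h' (Suc m) * G (Suc m))"
    by (rule sum.lessThan_Suc_shift)
  also have "\<dots> = (\<Sum>m<2*N. hh N m * G (m + 1))" by simp
  also have "\<dots> = (\<Sum>i<N. \<Sum>j<N. cc i * cc j * G (i + j + 1))"
    by (rule hh_sum) simp
  finally have D2: "(\<Sum>i<N. \<Sum>j<N. cc i * cc j * G (i + j + 1)) = (\<Sum>m<2*N+1. ?h' m * G m)" by simp
  have D: "(\<Sum>i<N. \<Sum>j<N. cc i * cc j * (G (i + j) - G (i + j + 1))) = (\<Sum>m<2*N+1. ee N m * G m)"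
    unfolding ee_def left_diff_distrib sum_subtractf right_diff_distrib D1 D2 by simp
  have split: "{..<2*N+1} = {..<N} \<union> {N..<2*N+1}" by auto
  have S: "(\<Sum>m<2*N+1. ee N m * G m) = (\<Sum>m<N. ee N m * G m) + (\<Sum>m\<in>{N..<2*N+1}. ee N m * G m)"
    unfolding split by (rule sum.union_disjoint) auto
  have "(\<Sum>m<N. ee N m * G m) = (\<Sum>m<N. if m = 0 then G 0 else 0)"
  proof (rule sum.cong[OF refl])
    fix m assume "m \<in> {..<N}"
    then show "ee N m * G m = (if m = 0 then G 0 else 0)"
      unfolding ee_def using hh_small[of m N] hh_small[of "m - 1" N] by auto
  qed
  also have "\<dots> = V" using N V by (subst sum.delta) auto
  finally have S1: "(\<Sum>m<N. ee N m * G m) = V" .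
  have "\<bar>\<Sum>m\<in>{N..<2*N+1}. ee N m * G m\<bar> \<le> (\<Sum>m\<in>{N..<2*N+1}. real N * (r ^ N * V))"
  proof (rule order_trans[OF sum_abs], rule sum_mono)
    fix m assume m: "m \<in> {N..<2*N+1}"
    have e: "\<bar>ee N m\<bar> \<le> real N" unfolding ee_def using hh_bounds[of N m] hh_bounds[of N "m-1"] by auto
    have "r ^ m \<le> r ^ N" using m r by (intro power_decreasing) auto
    then have g: "\<bar>G m\<bar> \<le> r ^ N * V" using Gb[of m] V by (meson mult_right_mono order_trans)
    show "\<bar>ee N m * G m\<bar> \<le> real N * (r ^ N * V)"
      unfolding abs_mult by (rule mult_mono[OF e g]) auto
  qed
  also have "\<dots> = real N * (real N + 1) * r ^ N * V" by simp
  finally show ?thesis unfolding D S S1 by simp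
qed




lemma exp_eps_bound: fixes eps :: real assumes "eps > 0"
  shows "exp (- max 1 (ln (1/eps))) / 2 \<le> 1 - exp (- eps)"
proof -
  have "exp eps \<ge> 1 + eps" using exp_ge_add_one_self[of eps] by simp
  then have e1: "exp (-eps) \<le> 1 / (1 + eps)" using assms by (simp add: exp_minus field_simps)
  have e2: "1 - 1/(1+eps) = eps / (1 + eps)" using assms by (simp add: field_simps)
  show ?thesis
  proof (cases "eps \<ge> 1")
    case True
    have "exp (- max 1 (ln (1/eps))) \<le> 1" by simp
    moreover have "eps / (1 + eps) \<ge> 1/2" using True by (simp add: field_simps)
    ultimately show ?thesis using e1 e2 by linarith
  next
    case False
    have "exp (- max 1 (ln (1/eps))) \<le> exp (- ln (1/eps))" by simp
    also have "\<dots> = eps" using assms by (simp add: ln_div)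
    finally have "exp (- max 1 (ln (1/eps))) \<le> eps" .
    moreover have "eps / (1 + eps) \<ge> eps / 2" using False assms by (intro divide_left_mono) auto
    ultimately show ?thesis using e1 e2 by linarith
  qed
qed

lemma numeric: assumes r: "0 < r" "r < 1"
  shows "\<exists>K::real. \<forall>eps>0. \<exists>N::nat. N \<ge> 1 \<and> real N * (real N + 1) * r ^ N \<le> 1 - exp (- eps)
          \<and> real (3 * N + 1) \<le> K * max 1 (ln (1 / eps))"
proof -
  define lam where "lam = - ln r"
  have lam: "lam > 0" unfolding lam_def using r by simp
  define \<theta> where "\<theta> = min 1 (lam / 3)"
  have th: "0 < \<theta>" "\<theta> \<le> 1" "3 * \<theta> \<le> lam" unfolding \<theta>_def using lam by auto
  define \<kappa> where "\<kappa> = ln (2 / \<theta>^2)"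
  have "\<theta>^2 \<le> 1" using th by (simp add: power_le_one)
  then have "2 / \<theta>^2 \<ge> 1" using th by (simp add: field_simps)
  then have ka: "\<kappa> \<ge> 0" unfolding \<kappa>_def by simp
  have ek: "exp (- \<kappa>) = \<theta>^2 / 2" unfolding \<kappa>_def using th by (simp add: exp_minus)
  define K where "K = 3 / \<theta> + 3 * \<kappa> / \<theta> + 4"
  show ?thesis
  proof (rule exI[of _ K], intro allI impI)
    fix eps :: real assume eps: "eps > 0"
    define L where "L = max 1 (ln (1/eps))"
    have L1: "L \<ge> 1" unfolding L_def by simp
    define N where "N = nat \<lceil>(L + \<kappa>) / \<theta>\<rceil>"
    have pos: "(L + \<kappa>) / \<theta> > 0" using L1 ka th by simp
    have Nge: "real N \<ge> (L + \<kappa>) / \<theta>" unfolding N_def using pos by linarith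
    have Nle: "real N < (L + \<kappa>) / \<theta> + 1" unfolding N_def using pos by linarith
    have N1: "N \<ge> 1" unfolding N_def using pos by linarith
    have tN: "\<theta> * real N \<ge> L + \<kappa>" using Nge th by (simp add: field_simps)
    have a: "real N + 1 \<le> exp (\<theta> * real N) / \<theta>"
    proof -
      have "1 + \<theta> * real N \<le> exp (\<theta> * real N)" using exp_ge_add_one_self[of "\<theta> * real N"] by simp
      moreover have "\<theta> * (real N + 1) = \<theta> + \<theta> * real N" by (simp add: algebra_simps)
      ultimately have "\<theta> * (real N + 1) \<le> exp (\<theta> * real N)" using th by linarith
      then show ?thesis using th by (simp add: field_simps)
    qed
    have rN: "r ^ N = exp (- lam * real N)"
    proof -
      have "r = exp (- lam)" unfolding lam_def using r by simp
      then have "r ^ N = exp (- lam) ^ N" by simp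
      also have "\<dots> = exp (real N * (- lam))" by (rule exp_of_nat_mult[symmetric])
      finally show ?thesis by (simp add: mult.commute)
    qed
    have "real N * (real N + 1) * r ^ N \<le> (real N + 1) * (real N + 1) * r ^ N"
      using r by (intro mult_right_mono) auto
    also have "\<dots> \<le> (exp (\<theta> * real N) / \<theta>) * (exp (\<theta> * real N) / \<theta>) * r ^ N"
      using a r by (intro mult_right_mono mult_mono) auto
    also have "\<dots> = exp (2 * \<theta> * real N - lam * real N) / \<theta>^2"
      unfolding rN by (simp add: power2_eq_square exp_add[symmetric] exp_diff algebra_simps)
    also have "\<dots> \<le> exp (- (\<theta> * real N)) / \<theta>^2"
    proof -
      have "3 * \<theta> * real N \<le> lam * real N" using th by (intro mult_right_mono) auto
      then have "2 * \<theta> * real N - lam * real N \<le> - (\<theta> * real N)" by linarith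
      then show ?thesis using th by (intro divide_right_mono) auto
    qed
    also have "\<dots> \<le> exp (- (L + \<kappa>)) / \<theta>^2"
      using tN th by (intro divide_right_mono) auto
    also have "\<dots> = exp (- L) / 2" using ek th by (simp add: exp_diff exp_minus field_simps)
    also have "\<dots> \<le> 1 - exp (- eps)" unfolding L_def by (rule exp_eps_bound[OF eps])
    finally have B: "real N * (real N + 1) * r ^ N \<le> 1 - exp (- eps)" .
    have "real (3 * N + 1) = 3 * real N + 1" by simp
    also have "\<dots> \<le> 3 * ((L + \<kappa>) / \<theta> + 1) + 1" using Nle by (smt (verit))
    also have "\<dots> = 3 / \<theta> * L + 3 * \<kappa> / \<theta> + 4" by (simp add: algebra_simps add_divide_distrib)
    also have "\<dots> \<le> 3 / \<theta> * L + 3 * \<kappa> / \<theta> * L + 4 * L"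
    proof -
      have "3 * \<kappa> / \<theta> * 1 \<le> 3 * \<kappa> / \<theta> * L"
        using ka th L1 by (intro mult_left_mono) auto
      then show ?thesis using L1 by linarith
    qed
    also have "\<dots> = K * L" unfolding K_def by (simp add: algebra_simps)
    finally show "\<exists>N::nat. N \<ge> 1 \<and> real N * (real N + 1) * r ^ N \<le> 1 - exp (- eps)
          \<and> real (3 * N + 1) \<le> K * max 1 (ln (1 / eps))"
      using N1 B unfolding L_def by blast
  qed
qed




lemma smult_mat_vec: "A \<in> carrier_mat nr nc \<Longrightarrow> v \<in> carrier_vec nc \<Longrightarrow> (a \<cdot>\<^sub>m A) *\<^sub>v v = a \<cdot>\<^sub>v (A *\<^sub>v (v :: real vec))"
  by (intro eq_vecI) (auto simp: scalar_prod_smult_left)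

lemma transpose_smult: "transpose_mat (a \<cdot>\<^sub>m A) = a \<cdot>\<^sub>m transpose_mat (A :: real mat)"
  by (intro eq_matI) auto

lemma zero_smult_vec: "(0::real) \<cdot>\<^sub>v v = 0\<^sub>v (dim_vec v)"
  by (intro eq_vecI) auto

lemma mat_vec_zero: "A \<in> carrier_mat nr nc \<Longrightarrow> A *\<^sub>v 0\<^sub>v nc = (0\<^sub>v nr :: real vec)"
  by (intro eq_vecI) (auto simp: scalar_prod_def)

lemma sym_dot: "X \<in> carrier_mat n n \<Longrightarrow> transpose_mat X = X \<Longrightarrow> p \<in> carrier_vec n \<Longrightarrow> q \<in> carrier_vec n
  \<Longrightarrow> (X *\<^sub>v p) \<bullet> q = p \<bullet> (X *\<^sub>v (q :: real vec))"
  using transpose_vec_mult_scalar[of X n n q p] by simp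

locale S =
  fixes n k :: nat and M Z :: "real mat" and s2 :: real
  assumes M: "M \<in> carrier_mat n n" and Msym: "transpose_mat M = M" and Z: "Z \<in> carrier_mat n k"
begin

definition A where "A = Z * transpose_mat Z"
definition T where "T = 1\<^sub>m n + (- s2) \<cdot>\<^sub>m (A * M)"
definition B where "B x y = x \<bullet> (M *\<^sub>v y)"

lemma A_car[simp]: "A \<in> carrier_mat n n" unfolding A_def using Z by auto
lemma Asym: "transpose_mat A = A" unfolding A_def using Z by (simp add: transpose_mult[of Z n k])
lemma M_car[simp]: "M \<in> carrier_mat n n" using M .
lemma dimM[simp]: "dim_row M = n" "dim_col M = n" using carrier_matD[OF M] by auto
lemma MA_car[simp]: "M * A \<in> carrier_mat n n" by (rule mult_carrier_mat[of _ n n]) simp_all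
lemma AM_car[simp]: "A * M \<in> carrier_mat n n" by (rule mult_carrier_mat[of _ n n]) simp_all
lemma T_car[simp]: "T \<in> carrier_mat n n" unfolding T_def by (rule add_carrier_mat) simp
lemma M_vec[simp]: "x \<in> carrier_vec n \<Longrightarrow> M *\<^sub>v x \<in> carrier_vec n" by (rule mult_mat_vec_carrier[of _ n n]) simp_all
lemma A_vec[simp]: "x \<in> carrier_vec n \<Longrightarrow> A *\<^sub>v x \<in> carrier_vec n" by (rule mult_mat_vec_carrier[of _ n n]) simp_all
lemma T_vec_car[simp]: "x \<in> carrier_vec n \<Longrightarrow> T *\<^sub>v x \<in> carrier_vec n" by (rule mult_mat_vec_carrier[of _ n n]) simp_all

lemma T_vec: "x \<in> carrier_vec n \<Longrightarrow> T *\<^sub>v x = x + (- s2) \<cdot>\<^sub>v (A *\<^sub>v (M *\<^sub>v x))"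
  unfolding T_def
  by (subst add_mult_distrib_mat_vec[of _ n n]) (auto simp: smult_mat_vec[of _ n n] smult_carrier_mat assoc_mult_mat_vec[of _ n n _ n])

lemma B_add_left: "x \<in> carrier_vec n \<Longrightarrow> y \<in> carrier_vec n \<Longrightarrow> z \<in> carrier_vec n \<Longrightarrow> B (x + y) z = B x z + B y z"
  unfolding B_def using M by (subst add_scalar_prod_distrib[of _ n]) auto
lemma B_add_right: "x \<in> carrier_vec n \<Longrightarrow> y \<in> carrier_vec n \<Longrightarrow> z \<in> carrier_vec n \<Longrightarrow> B x (y + z) = B x y + B x z"
  unfolding B_def by (subst mult_add_distrib_mat_vec[of _ n n]) (auto intro: scalar_prod_add_distrib[of _ n])
lemma B_smult_left: "x \<in> carrier_vec n \<Longrightarrow> y \<in> carrier_vec n \<Longrightarrow> B (a \<cdot>\<^sub>v x) y = a * B x y"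
  unfolding B_def using M by auto
lemma B_smult_right: "x \<in> carrier_vec n \<Longrightarrow> y \<in> carrier_vec n \<Longrightarrow> B x (a \<cdot>\<^sub>v y) = a * B x y"
  unfolding B_def using M by (auto simp: mult_mat_vec[of _ n n])
lemma B_sym: "x \<in> carrier_vec n \<Longrightarrow> y \<in> carrier_vec n \<Longrightarrow> B x y = B y x"
  unfolding B_def using M Msym sym_dot[of M n x y] comm_scalar_prod[of "M *\<^sub>v x" n y] by auto
lemma B_zero_left: "y \<in> carrier_vec n \<Longrightarrow> B (0\<^sub>v n) y = 0"
  unfolding B_def using M by auto

lemma B_A: "x \<in> carrier_vec n \<Longrightarrow> y \<in> carrier_vec n \<Longrightarrow> B (A *\<^sub>v (M *\<^sub>v x)) y = B x (A *\<^sub>v (M *\<^sub>v y))"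
proof -
  assume x: "x \<in> carrier_vec n" and y: "y \<in> carrier_vec n"
  have "B (A *\<^sub>v (M *\<^sub>v x)) y = (A *\<^sub>v (M *\<^sub>v x)) \<bullet> (M *\<^sub>v y)" unfolding B_def ..
  also have "\<dots> = (M *\<^sub>v x) \<bullet> (A *\<^sub>v (M *\<^sub>v y))" using x y M by (intro sym_dot[OF A_car Asym]) auto
  also have "\<dots> = x \<bullet> (M *\<^sub>v (A *\<^sub>v (M *\<^sub>v y)))" using x y M by (intro sym_dot[OF M_car Msym]) auto
  finally show ?thesis unfolding B_def .
qed

lemma T_selfadj: "x \<in> carrier_vec n \<Longrightarrow> y \<in> carrier_vec n \<Longrightarrow> B (T *\<^sub>v x) y = B x (T *\<^sub>v y)"
  using M by (simp add: T_vec B_add_left B_add_right B_smult_left B_smult_right B_A)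

fun tp :: "nat \<Rightarrow> real mat" where
  "tp 0 = 1\<^sub>m n" | "tp (Suc j) = T * tp j"

lemma tp_car[simp]: "tp j \<in> carrier_mat n n"
  by (induction j) (auto intro: mult_carrier_mat[of _ n n])

lemma tp_vec_car[simp]: "x \<in> carrier_vec n \<Longrightarrow> tp j *\<^sub>v x \<in> carrier_vec n"
  by (rule mult_mat_vec_carrier[of _ n n]) simp_all

lemma tp_Suc_vec: "x \<in> carrier_vec n \<Longrightarrow> tp (Suc j) *\<^sub>v x = T *\<^sub>v (tp j *\<^sub>v x)"
  by (simp add: assoc_mult_mat_vec[of _ n n _ n])

fun Fm :: "nat \<Rightarrow> real mat" where
  "Fm 0 = 0 \<cdot>\<^sub>m 1\<^sub>m n" | "Fm (Suc N) = Fm N + cc N \<cdot>\<^sub>m tp N"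

lemma Fm_car[simp]: "Fm N \<in> carrier_mat n n"
  by (induction N) auto

lemma Fm_vec_car[simp]: "x \<in> carrier_vec n \<Longrightarrow> Fm N *\<^sub>v x \<in> carrier_vec n"
  by (rule mult_mat_vec_carrier[of _ n n]) simp_all

fun lc :: "(nat \<Rightarrow> real vec) \<Rightarrow> nat \<Rightarrow> real vec" where
  "lc g 0 = 0\<^sub>v n" | "lc g (Suc N) = lc g N + cc N \<cdot>\<^sub>v g N"

lemma lc_car[simp]: "(\<And>j. g j \<in> carrier_vec n) \<Longrightarrow> lc g N \<in> carrier_vec n"
  by (induction N) auto

lemma Fm_vec: "u \<in> carrier_vec n \<Longrightarrow> Fm N *\<^sub>v u = lc (\<lambda>j. tp j *\<^sub>v u) N"
proof (induction N)
  case 0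
  then show ?case by (auto simp: smult_mat_vec[of _ n n] zero_smult_vec)
next
  case (Suc N)
  then show ?case
    by (auto simp: add_mult_distrib_mat_vec[of _ n n] smult_mat_vec[of _ n n] smult_carrier_mat)
qed

lemma T_lc: "(\<And>j. g j \<in> carrier_vec n) \<Longrightarrow> T *\<^sub>v lc g N = lc (\<lambda>j. T *\<^sub>v g j) N"
proof (induction N)
  case 0
  then show ?case by (simp add: mat_vec_zero[of _ n n])
next
  case (Suc N)
  then show ?case
    by (auto simp: mult_add_distrib_mat_vec[of _ n n] mult_mat_vec[of _ n n])
qed

lemma B_lc_right: "x \<in> carrier_vec n \<Longrightarrow> (\<And>j. h j \<in> carrier_vec n) \<Longrightarrow>
   B x (lc h N') = (\<Sum>j<N'. cc j * B x (h j))"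
proof (induction N')
  case 0
  then show ?case using B_sym B_zero_left by simp
next
  case (Suc N')
  then show ?case by (simp add: B_add_right B_smult_right)
qed

lemma B_lc: "(\<And>j. g j \<in> carrier_vec n) \<Longrightarrow> (\<And>j. h j \<in> carrier_vec n) \<Longrightarrow>
   B (lc g N) (lc h N') = (\<Sum>i<N. \<Sum>j<N'. cc i * cc j * B (g i) (h j))"
proof (induction N)
  case 0
  then show ?case using B_zero_left by simp
next
  case (Suc N)
  have "B (lc g (Suc N)) (lc h N') = B (lc g N) (lc h N') + cc N * B (g N) (lc h N')"
    using Suc.prems by (simp add: B_add_left B_smult_left)
  also have "\<dots> = (\<Sum>i<N. \<Sum>j<N'. cc i * cc j * B (g i) (h j)) + (\<Sum>j<N'. cc N * cc j * B (g N) (h j))"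
    using Suc by (simp add: B_lc_right sum_distrib_left mult.assoc)
  finally show ?case by simp
qed

lemma B_tp: "u \<in> carrier_vec n \<Longrightarrow> B (tp i *\<^sub>v u) (tp j *\<^sub>v u) = B u (tp (i + j) *\<^sub>v u)"
proof (induction i arbitrary: j)
  case 0
  then show ?case by simp
next
  case (Suc i)
  have "B (tp (Suc i) *\<^sub>v u) (tp j *\<^sub>v u) = B (tp i *\<^sub>v u) (tp (Suc j) *\<^sub>v u)"
    using Suc.prems by (simp only: tp_Suc_vec[OF Suc.prems]) (simp add: T_selfadj)
  also have "\<dots> = B u (tp (Suc i + j) *\<^sub>v u)" using Suc.IH[of "Suc j", OF Suc.prems] by (metis add_Suc add_Suc_right)
  finally show ?case .
qed

lemma expT: "x \<in> carrier_vec n \<Longrightarrow> y \<in> carrier_vec n \<Longrightarrow>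
  B (x + a \<cdot>\<^sub>v y) (T *\<^sub>v (x + a \<cdot>\<^sub>v y)) = B x (T *\<^sub>v x) + a * (B x (T *\<^sub>v y) + B y (T *\<^sub>v x)) + a^2 * B y (T *\<^sub>v y)"
  by (simp add: mult_add_distrib_mat_vec[of _ n n] mult_mat_vec[of _ n n] B_add_left B_add_right
      B_smult_left B_smult_right algebra_simps power2_eq_square)

lemma expI: "x \<in> carrier_vec n \<Longrightarrow> y \<in> carrier_vec n \<Longrightarrow>
  B (x + a \<cdot>\<^sub>v y) (x + a \<cdot>\<^sub>v y) = B x x + a * (B x y + B y x) + a^2 * B y y"
  by (simp add: B_add_left B_add_right B_smult_left B_smult_right algebra_simps power2_eq_square)

lemma Tsq: assumes r: "r > 0" and H: "\<forall>v\<in>carrier_vec n. \<bar>B v (T *\<^sub>v v)\<bar> \<le> r * B v v"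
  and v: "v \<in> carrier_vec n"
  shows "B (T *\<^sub>v v) (T *\<^sub>v v) \<le> r^2 * B v v"
proof -
  define x where "x = T *\<^sub>v v"
  have x: "x \<in> carrier_vec n" unfolding x_def using v by simp
  define Q where "Q = B x x"
  define V where "V = B v v"
  have c: "B x (T *\<^sub>v v) = Q" "B v (T *\<^sub>v x) = Q" unfolding Q_def x_def
    using v T_selfadj[of v "T *\<^sub>v v"] by auto
  have P: "B (x + r \<cdot>\<^sub>v v) (T *\<^sub>v (x + r \<cdot>\<^sub>v v)) \<le> r * B (x + r \<cdot>\<^sub>v v) (x + r \<cdot>\<^sub>v v)"
    using H x v by (meson abs_le_D1 add_carrier_vec smult_carrier_vec)
  have N: "- B (x + (-r) \<cdot>\<^sub>v v) (T *\<^sub>v (x + (-r) \<cdot>\<^sub>v v)) \<le> r * B (x + (-r) \<cdot>\<^sub>v v) (x + (-r) \<cdot>\<^sub>v v)"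
    using H x v by (meson abs_le_D2 add_carrier_vec smult_carrier_vec)
  have P': "B x (T *\<^sub>v x) + r * (2 * Q) + r^2 * B v (T *\<^sub>v v) \<le> r * (Q + r * (B x v + B v x) + r^2 * V)"
    using P unfolding expT[OF x v] expI[OF x v] c Q_def V_def by simp
  have N': "- (B x (T *\<^sub>v x) - r * (2 * Q) + r^2 * B v (T *\<^sub>v v)) \<le> r * (Q - r * (B x v + B v x) + r^2 * V)"
    using N unfolding expT[OF x v] expI[OF x v] c Q_def V_def by simp
  from P' N' have "r * (4 * Q) \<le> r * (2 * Q + 2 * r^2 * V)" by (simp add: algebra_simps)
  then have "4 * Q \<le> 2 * Q + 2 * r^2 * V" using r by (simp add: mult_le_cancel_left_pos)
  then show ?thesis unfolding Q_def V_def x_def by simp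
qed

lemma even_bound: assumes r: "r > 0" and H: "\<forall>v\<in>carrier_vec n. \<bar>B v (T *\<^sub>v v)\<bar> \<le> r * B v v"
  and u: "u \<in> carrier_vec n"
  shows "B (tp l *\<^sub>v u) (tp l *\<^sub>v u) \<le> r^(2*l) * B u u"
proof (induction l)
  case 0
  then show ?case using u by simp
next
  case (Suc l)
  have "B (tp (Suc l) *\<^sub>v u) (tp (Suc l) *\<^sub>v u) = B (T *\<^sub>v (tp l *\<^sub>v u)) (T *\<^sub>v (tp l *\<^sub>v u))"
    by (simp only: tp_Suc_vec[OF u])
  also have "\<dots> \<le> r^2 * B (tp l *\<^sub>v u) (tp l *\<^sub>v u)" using Tsq[OF r H] u by simp
  also have "\<dots> \<le> r^2 * (r^(2*l) * B u u)" using Suc r by (intro mult_left_mono) auto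
  also have "\<dots> = r^(2 * Suc l) * B u u" by (simp add: power_add power_mult power2_eq_square)
  finally show ?case .
qed

lemma G_bound: assumes r: "r > 0" and H: "\<forall>v\<in>carrier_vec n. \<bar>B v (T *\<^sub>v v)\<bar> \<le> r * B v v"
  and pos: "\<forall>v\<in>carrier_vec n. B v v \<ge> 0"
  and u: "u \<in> carrier_vec n"
  shows "\<bar>B u (tp m *\<^sub>v u)\<bar> \<le> r^m * B u u"
proof (cases "even m")
  case True
  then obtain l where m: "m = l + l" by (metis evenE mult_2)
  have "B u (tp m *\<^sub>v u) = B (tp l *\<^sub>v u) (tp l *\<^sub>v u)" using B_tp[OF u, of l l] m by simp
  moreover have "B (tp l *\<^sub>v u) (tp l *\<^sub>v u) \<ge> 0" using pos u by simp
  moreover have "r^m = r^(2*l)" using m by (simp add: mult_2)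
  ultimately show ?thesis using even_bound[OF r H u, of l] by simp
next
  case False
  then obtain l where m: "m = l + Suc l" by (metis oddE add_Suc_right mult_2 Suc_eq_plus1)
  have "B u (tp m *\<^sub>v u) = B (tp l *\<^sub>v u) (T *\<^sub>v (tp l *\<^sub>v u))"
    using B_tp[OF u, of l "Suc l"] m tp_Suc_vec[OF u, of l] by simp
  moreover have "\<bar>B (tp l *\<^sub>v u) (T *\<^sub>v (tp l *\<^sub>v u))\<bar> \<le> r * B (tp l *\<^sub>v u) (tp l *\<^sub>v u)"
    using H u by simp
  moreover have "r * B (tp l *\<^sub>v u) (tp l *\<^sub>v u) \<le> r * (r^(2*l) * B u u)"
    using even_bound[OF r H u, of l] r by (intro mult_left_mono) auto
  moreover have "r * (r^(2*l) * B u u) = r^m * B u u" using m by (simp add: mult_2)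
  ultimately show ?thesis by linarith
qed

lemma quad: assumes u: "u \<in> carrier_vec n"
  shows "B (Fm N *\<^sub>v u) (Fm N *\<^sub>v u) - B (Fm N *\<^sub>v u) (T *\<^sub>v (Fm N *\<^sub>v u))
    = (\<Sum>i<N. \<Sum>j<N. cc i * cc j * (B u (tp (i + j) *\<^sub>v u) - B u (tp (i + j + 1) *\<^sub>v u)))"
proof -
  have w: "\<And>j. tp j *\<^sub>v u \<in> carrier_vec n" using u by simp
  have w': "\<And>j. tp (Suc j) *\<^sub>v u \<in> carrier_vec n" using u tp_vec_car by blast
  have Tv: "T *\<^sub>v (Fm N *\<^sub>v u) = lc (\<lambda>j. tp (Suc j) *\<^sub>v u) N"
    unfolding Fm_vec[OF u] T_lc[OF w] using tp_Suc_vec[OF u] by simp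
  have "B (Fm N *\<^sub>v u) (Fm N *\<^sub>v u) = (\<Sum>i<N. \<Sum>j<N. cc i * cc j * B u (tp (i + j) *\<^sub>v u))"
    unfolding Fm_vec[OF u] B_lc[OF w w] B_tp[OF u] ..
  moreover have "B (Fm N *\<^sub>v u) (T *\<^sub>v (Fm N *\<^sub>v u)) = (\<Sum>i<N. \<Sum>j<N. cc i * cc j * B u (tp (i + j + 1) *\<^sub>v u))"
    apply (subst Tv) apply (subst Fm_vec[OF u]) apply (subst B_lc[OF w w']) apply (subst B_tp[OF u])
    by simp
  ultimately show ?thesis by (simp add: sum_subtractf right_diff_distrib)
qed

lemma tp_comm: "tp j * T = T * tp j"
proof (induction j)
  case 0
  then show ?case by (simp add: left_mult_one_mat[OF T_car] right_mult_one_mat[OF T_car])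
next
  case (Suc j)
  have "tp (Suc j) * T = T * (tp j * T)" by (simp add: assoc_mult_mat[of _ n n _ n _ n])
  also have "\<dots> = T * tp (Suc j)" using Suc by simp
  finally show ?case .
qed

lemma TT_M: "u \<in> carrier_vec n \<Longrightarrow> transpose_mat T *\<^sub>v (M *\<^sub>v u) = M *\<^sub>v (T *\<^sub>v u)"
proof -
  assume u: "u \<in> carrier_vec n"
  have TT: "transpose_mat T = 1\<^sub>m n + (- s2) \<cdot>\<^sub>m (M * A)"
    unfolding T_def by (simp add: transpose_add[of _ n n] transpose_smult transpose_mult[of _ n n _ n] Msym Asym smult_carrier_mat)
  have "transpose_mat T *\<^sub>v (M *\<^sub>v u) = M *\<^sub>v u + (- s2) \<cdot>\<^sub>v (M *\<^sub>v (A *\<^sub>v (M *\<^sub>v u)))"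
    unfolding TT using u
    by (subst add_mult_distrib_mat_vec[of _ n n]) (auto simp: smult_mat_vec[of _ n n] smult_carrier_mat assoc_mult_mat_vec[of _ n n _ n])
  also have "\<dots> = M *\<^sub>v (T *\<^sub>v u)"
    using u by (simp add: T_vec mult_add_distrib_mat_vec[of _ n n] mult_mat_vec[of _ n n])
  finally show ?thesis .
qed

lemma tpT_M: "u \<in> carrier_vec n \<Longrightarrow> transpose_mat (tp j) *\<^sub>v (M *\<^sub>v u) = M *\<^sub>v (tp j *\<^sub>v u)"
proof (induction j arbitrary: u)
  case 0
  then show ?case by simp
next
  case (Suc j)
  have "transpose_mat (tp (Suc j)) = transpose_mat (tp j) * transpose_mat T"
    by (simp add: transpose_mult[of _ n n _ n])
  then have "transpose_mat (tp (Suc j)) *\<^sub>v (M *\<^sub>v u) = transpose_mat (tp j) *\<^sub>v (transpose_mat T *\<^sub>v (M *\<^sub>v u))"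
    using Suc.prems by (simp add: assoc_mult_mat_vec[of _ n n _ n])
  also have "\<dots> = M *\<^sub>v (tp j *\<^sub>v (T *\<^sub>v u))" using Suc by (simp add: TT_M)
  also have "\<dots> = M *\<^sub>v ((tp j * T) *\<^sub>v u)" using Suc.prems by (simp add: assoc_mult_mat_vec[of _ n n _ n])
  also have "\<dots> = M *\<^sub>v (tp (Suc j) *\<^sub>v u)" by (simp add: tp_comm)
  finally show ?case .
qed

lemma FmT_M: "u \<in> carrier_vec n \<Longrightarrow> transpose_mat (Fm N) *\<^sub>v (M *\<^sub>v u) = M *\<^sub>v (Fm N *\<^sub>v u)"
proof (induction N)
  case 0
  then show ?case by (simp add: transpose_smult smult_mat_vec[of _ n n] zero_smult_vec mat_vec_zero[of _ n n])
next
  case (Suc N)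
  have "transpose_mat (Fm (Suc N)) = transpose_mat (Fm N) + cc N \<cdot>\<^sub>m transpose_mat (tp N)"
    by (simp add: transpose_add[of _ n n] transpose_smult smult_carrier_mat)
  then show ?case using Suc
    by (simp add: add_mult_distrib_mat_vec[of _ n n] smult_mat_vec[of _ n n] smult_carrier_mat
        mult_add_distrib_mat_vec[of _ n n] mult_mat_vec[of _ n n] tpT_M)
qed

definition CC :: "nat \<Rightarrow> real mat" where "CC N = sqrt s2 \<cdot>\<^sub>m (Fm N * Z)"

lemma CC_car[simp]: "CC N \<in> carrier_mat n k"
  unfolding CC_def by (intro smult_carrier_mat mult_carrier_mat[of _ n n]) (simp_all add: Z)

lemma CC_quad: assumes s2: "s2 \<ge> 0" and u: "u \<in> carrier_vec n"
  shows "(M *\<^sub>v u) \<bullet> ((CC N * transpose_mat (CC N)) *\<^sub>v (M *\<^sub>v u))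
    = B (Fm N *\<^sub>v u) (Fm N *\<^sub>v u) - B (Fm N *\<^sub>v u) (T *\<^sub>v (Fm N *\<^sub>v u))"
proof -
  define v where "v = Fm N *\<^sub>v u"
  have v: "v \<in> carrier_vec n" unfolding v_def using u by (simp add: mult_mat_vec_carrier[of _ n n])
  define x where "x = M *\<^sub>v u"
  have x: "x \<in> carrier_vec n" unfolding x_def using u by simp
  define w where "w = M *\<^sub>v v"
  have w: "w \<in> carrier_vec n" unfolding w_def using v by simp
  define y where "y = transpose_mat Z *\<^sub>v w"
  have y: "y \<in> carrier_vec k" unfolding y_def using w Z by simp
  have CT: "transpose_mat (CC N) *\<^sub>v x = sqrt s2 \<cdot>\<^sub>v y"
  proof -
    have "transpose_mat (CC N) = sqrt s2 \<cdot>\<^sub>m (transpose_mat Z * transpose_mat (Fm N))"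
      unfolding CC_def using Z by (simp add: transpose_smult transpose_mult[of _ n n _ k])
    then show ?thesis using x Z u
      by (simp add: smult_mat_vec[of _ k n] assoc_mult_mat_vec[of _ k n _ n] FmT_M x_def y_def w_def v_def)
  qed
  have "x \<bullet> ((CC N * transpose_mat (CC N)) *\<^sub>v x) = x \<bullet> (CC N *\<^sub>v (transpose_mat (CC N) *\<^sub>v x))"
    using x by (simp add: assoc_mult_mat_vec[of _ n k _ n])
  also have "\<dots> = (transpose_mat (CC N) *\<^sub>v x) \<bullet> (transpose_mat (CC N) *\<^sub>v x)"
    using x CC_car by (intro transpose_vec_mult_scalar[symmetric, of _ n k]) (auto intro: mult_mat_vec_carrier[of _ k n])
  also have "\<dots> = s2 * (y \<bullet> y)" unfolding CT using y s2 by simp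
  also have "y \<bullet> y = w \<bullet> (Z *\<^sub>v y)" unfolding y_def
    using Z w by (intro transpose_vec_mult_scalar[of _ n k]) auto
  also have "Z *\<^sub>v y = A *\<^sub>v w" unfolding y_def A_def using Z w by (simp add: assoc_mult_mat_vec[of _ n k _ n])
  also have "w \<bullet> (A *\<^sub>v w) = B v (A *\<^sub>v (M *\<^sub>v v))"
    unfolding w_def B_def using v by (intro sym_dot[OF M_car Msym]) auto
  also have "s2 * B v (A *\<^sub>v (M *\<^sub>v v)) = B v v - B v (T *\<^sub>v v)"
    using v by (simp add: T_vec B_add_right B_smult_right)
  finally show ?thesis unfolding x_def v_def .
qed

lemma dimZ[simp]: "dim_row Z = n" "dim_col Z = k" using carrier_matD[OF Z] by auto

lemma dims[simp]: "dim_row T = n" "dim_col T = n" "dim_row (tp j) = n" "dim_col (tp j) = n"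
  "dim_row (Fm N) = n" "dim_col (Fm N) = n" "dim_row A = n" "dim_col A = n"
  using carrier_matD[OF T_car] carrier_matD[OF tp_car] carrier_matD[OF Fm_car] carrier_matD[OF A_car] by auto

lemma pe_T: "poly_expr M Z T 3"
proof -
  have "poly_expr M Z (1\<^sub>m n) 3" using poly_expr.id_row[of M Z] poly_expr.mono by fastforce
  moreover have "poly_expr M Z (A * M) (1 + 1 + 1)" unfolding A_def
    by (rule poly_expr.mult[OF poly_expr.mult[OF poly_expr.var_Z poly_expr.var_ZT] poly_expr.var_M]) simp_all
  moreover have "(1 + 1 + 1 :: nat) = 3" by simp
  ultimately have "poly_expr M Z (1\<^sub>m n) 3" "poly_expr M Z (A * M) 3" by metis+
  then show ?thesis unfolding T_def
    by (intro poly_expr.add poly_expr.smult) (auto simp: A_def[symmetric])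
qed

lemma pe_tp: "poly_expr M Z (tp j) (3 * j)"
proof (induction j)
  case 0
  then show ?case using poly_expr.id_row[of M Z] by simp
next
  case (Suc j)
  then show ?case using poly_expr.mult[OF pe_T Suc] by simp
qed

lemma pe_Fm: "poly_expr M Z (Fm N) (3 * N)"
proof (induction N)
  case 0
  then show ?case using poly_expr.smult[OF poly_expr.id_row[of M Z]] by simp
next
  case (Suc N)
  have a: "poly_expr M Z (Fm N) (3 * Suc N)" using poly_expr.mono[OF Suc] by simp
  have b: "poly_expr M Z (cc N \<cdot>\<^sub>m tp N) (3 * Suc N)" using poly_expr.mono[OF poly_expr.smult[OF pe_tp]] by simp
  show ?case using poly_expr.add[OF a b] by simp
qed

lemma pe_CC: "poly_expr M Z (CC N) (3 * N + 1)"
  unfolding CC_def using poly_expr.smult[OF poly_expr.mult[OF pe_Fm poly_expr.var_Z]] by simp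

end



theorem mainTheorem11:
  "\<forall>c0 :: real. c0 > 0 \<longrightarrow> (\<exists>K :: real. \<forall>(n :: nat) (k :: nat) (M :: real mat) (Minv :: real mat) (Z :: real mat) (eps :: real).
     M \<in> carrier_mat n n \<longrightarrow> pos_def_mat M \<longrightarrow>
     Minv \<in> carrier_mat n n \<longrightarrow> inverts_mat M Minv \<longrightarrow>
     Z \<in> carrier_mat n k \<longrightarrow>
     spec_approx c0 Minv (Z * transpose_mat Z) \<longrightarrow>
     eps > 0 \<longrightarrow>
     (\<exists>(C :: real mat) (d :: nat). poly_expr M Z C d \<and> real d \<le> K * max 1 (ln (1 / eps)) \<and>
        spec_approx eps (C * transpose_mat C) Minv))"
proof (intro allI impI)
  fix c0 :: real assume c0: "c0 > 0"
  define a where "a = exp (- c0)"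
  define b where "b = exp c0"
  have ab: "0 < a" "a < b" unfolding a_def b_def using c0 by auto
  define r where "r = (b - a) / (b + a)"
  have r: "0 < r" "r < 1" unfolding r_def using ab by (auto simp: field_simps)
  obtain K where K: "\<forall>eps>0. \<exists>N::nat. N \<ge> 1 \<and> real N * (real N + 1) * r ^ N \<le> 1 - exp (- eps)
          \<and> real (3 * N + 1) \<le> K * max 1 (ln (1 / eps))"
    using numeric[OF r] by blast
  show "\<exists>K :: real. \<forall>(n :: nat) (k :: nat) (M :: real mat) (Minv :: real mat) (Z :: real mat) (eps :: real).
     M \<in> carrier_mat n n \<longrightarrow> pos_def_mat M \<longrightarrow>
     Minv \<in> carrier_mat n n \<longrightarrow> inverts_mat M Minv \<longrightarrow>
     Z \<in> carrier_mat n k \<longrightarrow>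
     spec_approx c0 Minv (Z * transpose_mat Z) \<longrightarrow>
     eps > 0 \<longrightarrow>
     (\<exists>(C :: real mat) (d :: nat). poly_expr M Z C d \<and> real d \<le> K * max 1 (ln (1 / eps)) \<and>
        spec_approx eps (C * transpose_mat C) Minv)"
  proof (rule exI[of _ K], intro allI impI)
    fix n k :: nat and M Minv Z :: "real mat" and eps :: real
    assume Mc: "M \<in> carrier_mat n n" and pd: "pos_def_mat M" and Mic: "Minv \<in> carrier_mat n n"
      and inv: "inverts_mat M Minv" and Zc: "Z \<in> carrier_mat n k"
      and sa: "spec_approx c0 Minv (Z * transpose_mat Z)" and eps: "eps > 0"
    obtain N where N1: "N \<ge> 1" and NB: "real N * (real N + 1) * r ^ N \<le> 1 - exp (- eps)"
      and Nd: "real (3 * N + 1) \<le> K * max 1 (ln (1 / eps))"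
      using K eps by blast
    define s2 where "s2 = 2 / (a + b)"
    have s2: "s2 > 0" unfolding s2_def using ab by simp
    have Msym: "transpose_mat M = M" using pd unfolding pos_def_mat_def by simp
    interpret S n k M Z s2 using Mc Msym Zc by unfold_locales
    have MMi: "M * Minv = 1\<^sub>m n" using inv Mc unfolding inverts_mat_def by simp
    have MiM: "Minv * M = 1\<^sub>m n" using mat_mult_left_right_inverse[OF Mc Mic MMi] .
    have Miv: "\<And>v. v \<in> carrier_vec n \<Longrightarrow> Minv *\<^sub>v (M *\<^sub>v v) = v"
      using MiM Mc Mic by (metis assoc_mult_mat_vec one_mult_mat_vec)
    have Mv: "\<And>x. x \<in> carrier_vec n \<Longrightarrow> M *\<^sub>v (Minv *\<^sub>v x) = x"
      using MMi Mc Mic by (metis assoc_mult_mat_vec one_mult_mat_vec)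
    have pos: "\<forall>v\<in>carrier_vec n. B v v \<ge> 0"
    proof
      fix v :: "real vec" assume v: "v \<in> carrier_vec n"
      show "B v v \<ge> 0"
      proof (cases "v = 0\<^sub>v n")
        case True then show ?thesis using B_zero_left v by simp
      next
        case False then show ?thesis using pd v Mc unfolding pos_def_mat_def B_def
          by (auto dest!: bspec[of _ _ v] intro: less_imp_le)
      qed
    qed
    have Minv_B: "\<And>v. v \<in> carrier_vec n \<Longrightarrow> (M *\<^sub>v v) \<bullet> (Minv *\<^sub>v (M *\<^sub>v v)) = B v v"
      unfolding B_def using Miv by (simp add: comm_scalar_prod[of _ n])
    have A_B: "\<And>v. v \<in> carrier_vec n \<Longrightarrow> (M *\<^sub>v v) \<bullet> (A *\<^sub>v (M *\<^sub>v v)) = B v (A *\<^sub>v (M *\<^sub>v v))"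
      unfolding B_def by (intro sym_dot[OF M_car Msym]) auto
    have H: "\<forall>v\<in>carrier_vec n. \<bar>B v (T *\<^sub>v v)\<bar> \<le> r * B v v"
    proof
      fix v :: "real vec" assume v: "v \<in> carrier_vec n"
      define x where "x = M *\<^sub>v v"
      have x: "x \<in> carrier_vec n" unfolding x_def using v by simp
      define V where "V = B v v"
      define W where "W = B v (A *\<^sub>v (M *\<^sub>v v))"
      have h1: "W \<le> b * V"
      proof -
        have "x \<bullet> (A *\<^sub>v x) \<le> x \<bullet> ((exp c0 \<cdot>\<^sub>m Minv) *\<^sub>v x)"
          using sa x Mic unfolding spec_approx_def loewner_ge_def A_def by auto
        then show ?thesis unfolding W_def V_def b_def
          using A_B[OF v] Minv_B[OF v] x Mic by (simp add: smult_mat_vec[of _ n n] x_def)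
      qed
      have h2: "a * V \<le> W"
      proof -
        have "x \<bullet> ((exp (- c0) \<cdot>\<^sub>m Minv) *\<^sub>v x) \<le> x \<bullet> (A *\<^sub>v x)"
          using sa x Mic unfolding spec_approx_def loewner_ge_def A_def by auto
        then show ?thesis unfolding W_def V_def a_def
          using A_B[OF v] Minv_B[OF v] x Mic by (simp add: smult_mat_vec[of _ n n] x_def)
      qed
      have BT: "B v (T *\<^sub>v v) = V - s2 * W"
        unfolding V_def W_def using v by (simp add: T_vec B_add_right B_smult_right)
      have e: "(a + b) * (V - s2 * W) = (a + b) * V - 2 * W" unfolding s2_def using ab by (simp add: field_simps)
      have d1: "(a + b) * V = a * V + b * V" "(b - a) * V = b * V - a * V" by (simp_all add: algebra_simps)
      have "\<bar>(a + b) * V - 2 * W\<bar> \<le> (b - a) * V" unfolding d1 abs_le_iff using h1 h2 by linarith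
      then have "\<bar>(a + b) * (V - s2 * W)\<bar> \<le> (b - a) * V" using e by simp
      then have "(a + b) * \<bar>V - s2 * W\<bar> \<le> (b - a) * V" using ab by (simp add: abs_mult)
      then have "\<bar>V - s2 * W\<bar> \<le> (b - a) * V / (a + b)" using ab by (simp add: field_simps)
      then show "\<bar>B v (T *\<^sub>v v)\<bar> \<le> r * B v v" unfolding BT r_def V_def by (simp add: field_simps)
    qed
    have CCc: "CC N * transpose_mat (CC N) \<in> carrier_mat n n"
      by (rule mult_carrier_mat[of _ n k]) auto
    have key: "\<And>x. x \<in> carrier_vec n \<Longrightarrow>
       \<bar>x \<bullet> ((CC N * transpose_mat (CC N)) *\<^sub>v x) - x \<bullet> (Minv *\<^sub>v x)\<bar> \<le> (1 - exp (- eps)) * (x \<bullet> (Minv *\<^sub>v x))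
       \<and> x \<bullet> (Minv *\<^sub>v x) \<ge> 0"
    proof -
      fix x :: "real vec" assume x: "x \<in> carrier_vec n"
      define u where "u = Minv *\<^sub>v x"
      have u: "u \<in> carrier_vec n" unfolding u_def using x Mic by simp
      have xu: "x = M *\<^sub>v u" unfolding u_def using Mv[OF x] by simp
      define V where "V = B u u"
      have V: "x \<bullet> (Minv *\<^sub>v x) = V" unfolding V_def xu using Minv_B[OF u] .
      have V0: "V \<ge> 0" unfolding V_def using pos u by simp
      define G where "G m = B u (tp m *\<^sub>v u)" for m
      have G0: "G 0 = V" unfolding G_def V_def using u by simp
      have Gb: "\<And>m. \<bar>G m\<bar> \<le> r ^ m * V" unfolding G_def V_def using G_bound[OF r(1) H pos u] .
      have Q: "x \<bullet> ((CC N * transpose_mat (CC N)) *\<^sub>v x) = (\<Sum>i<N. \<Sum>j<N. cc i * cc j * (G (i + j) - G (i + j + 1)))"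
        unfolding xu CC_quad[OF less_imp_le[OF s2] u] quad[OF u] G_def ..
      have "\<bar>x \<bullet> ((CC N * transpose_mat (CC N)) *\<^sub>v x) - V\<bar> \<le> real N * (real N + 1) * r ^ N * V"
        unfolding Q by (rule scalar_main[OF N1 _ _ G0 V0 Gb]) (use r in auto)
      also have "\<dots> \<le> (1 - exp (- eps)) * V" using NB V0 by (intro mult_right_mono) auto
      finally show "\<bar>x \<bullet> ((CC N * transpose_mat (CC N)) *\<^sub>v x) - x \<bullet> (Minv *\<^sub>v x)\<bar> \<le> (1 - exp (- eps)) * (x \<bullet> (Minv *\<^sub>v x))
       \<and> x \<bullet> (Minv *\<^sub>v x) \<ge> 0" using V V0 by simp
    qed
    have ee: "exp eps * exp (- eps) = 1" by (simp add: exp_minus)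
    have ee2: "2 - exp (- eps) \<le> exp eps"
      using exp_ge_add_one_self[of eps] exp_ge_add_one_self[of "- eps"] by linarith
    have spec: "spec_approx eps (CC N * transpose_mat (CC N)) Minv"
      unfolding spec_approx_def loewner_ge_def
    proof (intro conjI ballI)
      have dr: "dim_row (exp eps \<cdot>\<^sub>m (CC N * transpose_mat (CC N))) = n" "dim_row Minv = n"
        using carrier_matD[OF CCc] carrier_matD[OF Mic] by simp_all
      have c1: "exp eps \<cdot>\<^sub>m (CC N * transpose_mat (CC N)) \<in> carrier_mat n n"
        "exp (- eps) \<cdot>\<^sub>m (CC N * transpose_mat (CC N)) \<in> carrier_mat n n"
        using CCc by (simp_all only: smult_carrier_mat)
      show "exp eps \<cdot>\<^sub>m (CC N * transpose_mat (CC N)) \<in> carrier_mat (dim_row (exp eps \<cdot>\<^sub>m (CC N * transpose_mat (CC N)))) (dim_row (exp eps \<cdot>\<^sub>m (CC N * transpose_mat (CC N))))"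
        unfolding dr by (rule c1)
      show "Minv \<in> carrier_mat (dim_row (exp eps \<cdot>\<^sub>m (CC N * transpose_mat (CC N)))) (dim_row (exp eps \<cdot>\<^sub>m (CC N * transpose_mat (CC N))))"
        unfolding dr by (rule Mic)
      show "Minv \<in> carrier_mat (dim_row Minv) (dim_row Minv)" unfolding dr by (rule Mic)
      show "exp (- eps) \<cdot>\<^sub>m (CC N * transpose_mat (CC N)) \<in> carrier_mat (dim_row Minv) (dim_row Minv)"
        unfolding dr by (rule c1)
    next
      fix x :: "real vec" assume "x \<in> carrier_vec (dim_row (exp eps \<cdot>\<^sub>m (CC N * transpose_mat (CC N))))"
      then have x: "x \<in> carrier_vec n" using carrier_matD[OF CCc] by simp
      define Q where "Q = x \<bullet> ((CC N * transpose_mat (CC N)) *\<^sub>v x)"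
      define V where "V = x \<bullet> (Minv *\<^sub>v x)"
      have kk: "\<bar>Q - V\<bar> \<le> (1 - exp (- eps)) * V" "V \<ge> 0" using key[OF x] unfolding Q_def V_def by auto
      have d: "(1 - exp (- eps)) * V = V - exp (- eps) * V" by (simp add: algebra_simps)
      have "exp (- eps) * V \<le> Q" using kk(1) unfolding d abs_le_iff by linarith
      then have "exp eps * (exp (- eps) * V) \<le> exp eps * Q" by simp
      then have "V \<le> exp eps * Q" using ee by (metis mult.assoc mult_1)
      moreover have "(exp eps \<cdot>\<^sub>m (CC N * transpose_mat (CC N))) *\<^sub>v x = exp eps \<cdot>\<^sub>v ((CC N * transpose_mat (CC N)) *\<^sub>v x)"
        by (rule smult_mat_vec[OF CCc x])
      moreover have "x \<bullet> (exp eps \<cdot>\<^sub>v ((CC N * transpose_mat (CC N)) *\<^sub>v x)) = exp eps * Q"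
        unfolding Q_def using x CCc by (intro scalar_prod_smult_right) (simp add: carrier_matD[OF CC_car] carrier_vecD)
      ultimately show "x \<bullet> (Minv *\<^sub>v x) \<le> x \<bullet> ((exp eps \<cdot>\<^sub>m (CC N * transpose_mat (CC N))) *\<^sub>v x)"
        unfolding V_def by simp
    next
      fix x :: "real vec" assume "x \<in> carrier_vec (dim_row Minv)"
      then have x: "x \<in> carrier_vec n" using carrier_matD[OF Mic] by simp
      define Q where "Q = x \<bullet> ((CC N * transpose_mat (CC N)) *\<^sub>v x)"
      define V where "V = x \<bullet> (Minv *\<^sub>v x)"
      have kk: "\<bar>Q - V\<bar> \<le> (1 - exp (- eps)) * V" "V \<ge> 0" using key[OF x] unfolding Q_def V_def by auto
      have d: "(1 - exp (- eps)) * V = V - exp (- eps) * V" "(2 - exp (- eps)) * V = 2 * V - exp (- eps) * V" by (simp_all add: algebra_simps)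
      have "Q \<le> (2 - exp (- eps)) * V" using kk(1) unfolding d abs_le_iff by linarith
      also have "\<dots> \<le> exp eps * V" using ee2 kk(2) by (intro mult_right_mono) auto
      finally have "exp (- eps) * Q \<le> exp (- eps) * (exp eps * V)" by simp
      then have "exp (- eps) * Q \<le> V" using ee by (metis mult.assoc mult.commute mult_1)
      moreover have "(exp (- eps) \<cdot>\<^sub>m (CC N * transpose_mat (CC N))) *\<^sub>v x = exp (- eps) \<cdot>\<^sub>v ((CC N * transpose_mat (CC N)) *\<^sub>v x)"
        by (rule smult_mat_vec[OF CCc x])
      moreover have "x \<bullet> (exp (- eps) \<cdot>\<^sub>v ((CC N * transpose_mat (CC N)) *\<^sub>v x)) = exp (- eps) * Q"
        unfolding Q_def using x CCc by (intro scalar_prod_smult_right) (simp add: carrier_matD[OF CC_car] carrier_vecD)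
      ultimately show "x \<bullet> ((exp (- eps) \<cdot>\<^sub>m (CC N * transpose_mat (CC N))) *\<^sub>v x) \<le> x \<bullet> (Minv *\<^sub>v x)"
        unfolding V_def by simp
    qed
    show "\<exists>(C :: real mat) (d :: nat). poly_expr M Z C d \<and> real d \<le> K * max 1 (ln (1 / eps)) \<and>
        spec_approx eps (C * transpose_mat C) Minv"
      using pe_CC[of N] Nd spec by blast
  qed
qed


end
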